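(* Let $0<\lambda\le1$, $f\in\mathcal U(\lambda)$ and $a_2=f''(0)/2$. If $\mu$ is a complex number with $|\mu|\le 1-\lambda$ and $a_2+\mu\ne 0$, then $-\dfrac{1}{a_2+\mu}\notin f(\mathbb D)$.
   Context: $\mathbb D=\{z\in\mathbb C:|z|<1\}$. $\mathcal A$ is the class of functions $f$ analytic in $\mathbb D$ with $f(z)=z+\sum_{k\ge2}a_kz^k$. For $f\in\mathcal A$ with $f(z)\ne0$ for $z\in\mathbb D\setminus\{0\}$, set $U_f(z)=\left(\frac{z}{f(z)}\right)^2f'(z)-1$. For $0<\lambda\le1$, $\mathcal U(\lambda)$ is the class of such $f\in\mathcal A$ with $|U_f(z)|<\lambda$ for all $z\in\mathbb D$. *)

theory Defs
  imports "HOL-Complex_Analysis.Complex_Analysis"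
begin

definition class_A :: "(complex \<Rightarrow> complex) set" where
  "class_A = {f. f holomorphic_on ball 0 1 \<and> f 0 = 0 \<and> deriv f 0 = 1}"

text \<open>U_f(z) = (z/f(z))^2 f'(z) - 1, extended at the removable point z = 0 by its
  limit value (z/f(z) tends to 1/f'(0) = 1 there), i.e. U_f(0) = 0.\<close>
definition U_op :: "(complex \<Rightarrow> complex) \<Rightarrow> complex \<Rightarrow> complex" where
  "U_op f z = (if z = 0 then 0 else (z / f z)^2 * deriv f z - 1)"

definition class_U :: "real \<Rightarrow> (complex \<Rightarrow> complex) set" where
  "class_U lam = {f. f \<in> class_A \<and> (\<forall>z\<in>ball 0 1 - {0}. f z \<noteq> 0) \<and>
                     (\<forall>z\<in>ball 0 1. norm (U_op f z) < lam)}"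

end

theory Submission imports Defs begin

lemma max_lemma:
  fixes H :: "complex \<Rightarrow> complex"
  assumes holH: "H holomorphic_on ball 0 1" and lam: "0 < lam"
    and bnd: "\<And>z. norm z < 1 \<Longrightarrow> norm (z^2 * H z) < lam"
    and z: "norm z < 1"
  shows "norm (H z) \<le> lam"
proof -
  have "norm (H z) < a" if a: "lam < a" for a
  proof -
    have a0: "0 < a" using a lam by linarith
    have "sqrt (lam/a) < 1" using a a0 lam by (metis real_sqrt_less_iff real_sqrt_one divide_less_eq_1_pos)
    hence "max (sqrt (lam/a)) (norm z) < 1" using z by simp
    then obtain r where r: "max (sqrt (lam/a)) (norm z) < r" and "r < 1"
      using dense by blast
    then have nzr: "norm z < r" and sr: "sqrt (lam/a) < r" by auto
    have "0 < r" using nzr by (meson norm_ge_zero le_less_trans)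
    have "sqrt (lam/a) ^ 2 < r^2" using sr lam a0 by (intro power_strict_mono) auto
    hence "lam / a < r^2" using lam a0 by simp
    hence ira: "lam / r^2 < a" using \<open>0<r\<close> a0 by (simp add: field_simps)
    have holh': "H holomorphic_on ball 0 r"
      by (meson holH \<open>r < 1\<close> holomorphic_on_subset less_eq_real_def subset_ball)
    have conth': "continuous_on (cball 0 r) H"
      by (meson \<open>r < 1\<close> dual_order.trans holH holomorphic_on_imp_continuous_on holomorphic_on_subset mem_ball_0 mem_cball_0 not_less subsetI)
    obtain w where w: "norm w = r" and lenw: "\<And>z. norm z < r \<Longrightarrow> norm(H z) \<le> norm(H w)"
      using conth' \<open>0 < r\<close> by (auto simp add: intro: Schwarz1 [OF holh'])
    have "norm (w^2 * H w) < lam" using bnd w \<open>r<1\<close> by simp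
    hence "r^2 * norm (H w) < lam" using w by (simp add: norm_mult norm_power)
    hence "norm (H w) < lam / r^2" using \<open>0<r\<close> by (simp add: field_simps)
    then show ?thesis using lenw[OF nzr] ira by linarith
  qed
  then show ?thesis using not_le by blast
qed

theorem corollary1p2:
  fixes lam :: real and f :: "complex \<Rightarrow> complex" and mu :: complex
  assumes "0 < lam" and "lam \<le> 1"
    and "f \<in> class_U lam"
    and "norm mu \<le> 1 - lam"
    and "(deriv (deriv f) 0) / 2 + mu \<noteq> 0"
  shows "- 1 / ((deriv (deriv f) 0) / 2 + mu) \<notin> f ` ball 0 1"
proof
  define B where "B = ball (0::complex) 1"
  have oB: "open B" and B0: "0 \<in> B" by (auto simp: B_def)
  have holf: "f holomorphic_on B" and f0: "f 0 = 0" and df0: "deriv f 0 = 1"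
    using assms(3) by (auto simp: class_U_def class_A_def B_def)
  have fnz: "\<And>z. z \<in> B \<Longrightarrow> z \<noteq> 0 \<Longrightarrow> f z \<noteq> 0"
    using assms(3) by (auto simp: class_U_def B_def)
  have Ub: "\<And>z. z \<in> B \<Longrightarrow> norm (U_op f z) < lam"
    using assms(3) by (auto simp: class_U_def B_def)
  define g where "g z = (if z = 0 then deriv f 0 else f z / z)" for z
  have holg: "g holomorphic_on B"
    by (rule pole_theorem_open_0 [OF holf oB, of 0]) (auto simp: g_def f0)
  have fg: "\<And>z. f z = z * g z" by (auto simp: g_def f0)
  have g0: "g 0 = 1" by (simp add: g_def df0)
  have gnz: "\<And>z. z \<in> B \<Longrightarrow> g z \<noteq> 0" using fnz g0 by (auto simp: g_def)
  define r where "r z = 1 / g z" for z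
  have holr: "r holomorphic_on B" unfolding r_def using holg gnz by (intro holomorphic_intros) auto
  have r0: "r 0 = 1" by (simp add: r_def g0)
  define h where "h z = (if z = 0 then deriv r 0 else (r z - r 0) / (z - 0))" for z
  have holh: "h holomorphic_on B"
    unfolding h_def by (rule pole_lemma_open[OF holr oB])
  have hf: "\<And>z. z \<noteq> 0 \<Longrightarrow> h z = 1 / f z - 1 / z"
    by (simp add: h_def r_def r0 fg g0 field_simps divide_simps)
  have dh: "deriv h z = - deriv f z / (f z)^2 + 1 / z^2" if z: "z \<in> B" "z \<noteq> 0" for z
  proof -
    have "(f has_field_derivative deriv f z) (at z)"
      using holf oB z by (meson holomorphic_derivI)
    hence "((\<lambda>w. 1 / f w - 1 / w) has_field_derivative (- deriv f z / (f z)^2 + 1 / z^2)) (at z)"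
      using fnz[OF z] z
      by (auto intro!: derivative_eq_intros simp: field_simps power2_eq_square)
    hence "(h has_field_derivative (- deriv f z / (f z)^2 + 1 / z^2)) (at z)"
      by (rule has_field_derivative_transform_within_open[where S="B - {0}"])
         (use z oB hf in auto)
    thus ?thesis by (rule DERIV_imp_deriv)
  qed
  have hdb: "norm (deriv h z) \<le> lam" if "z \<in> B" for z
  proof (rule max_lemma[where H="deriv h"])
    show "deriv h holomorphic_on ball 0 1" using holh oB unfolding B_def by (intro holomorphic_deriv) auto
    show "norm (w^2 * deriv h w) < lam" if "norm w < 1" for w
    proof (cases "w = 0")
      case True thus ?thesis using assms(1) by simp
    next
      case False
      have wB: "w \<in> B" using that by (simp add: B_def)
      have "w^2 * deriv h w = - U_op f w"
        using False fnz[OF wB False] dh[OF wB False]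
        by (simp add: U_op_def field_simps power2_eq_square)
      thus ?thesis using Ub[OF wB] by simp
    qed
  qed (use assms(1) that in \<open>auto simp: B_def\<close>)
  have hB: "norm (h z - h 0) \<le> lam * norm z" if "z \<in> B" for z
  proof -
    have "norm (h z - h 0) \<le> lam * norm (z - 0)"
    proof (rule field_differentiable_bound[where S=B and f'="deriv h"])
      show "convex B" by (simp add: B_def)
      show "(h has_field_derivative deriv h w) (at w within B)" if "w \<in> B" for w
        using holh oB that by (meson holomorphic_derivI)
    qed (use hdb that B0 in auto)
    thus ?thesis by simp
  qed
  have dg: "(g has_field_derivative deriv g z) (at z)" if "z \<in> B" for z
    using holg oB that by (meson holomorphic_derivI)
  have "(r has_field_derivative (- deriv g 0 / (g 0)^2)) (at 0)"
    unfolding r_def using dg[OF B0] g0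
    by (auto intro!: derivative_eq_intros simp: power2_eq_square)
  hence h0: "h 0 = - deriv g 0" using g0 by (simp add: h_def DERIV_imp_deriv)
  have dfe: "deriv f z = g z + z * deriv g z" if "z \<in> B" for z
  proof -
    have "((\<lambda>w. w * g w) has_field_derivative (g z + z * deriv g z)) (at z)"
      using dg[OF that] by (auto intro!: derivative_eq_intros)
    then have "(f has_field_derivative (g z + z * deriv g z)) (at z)"
      proof -
      have "f = (\<lambda>w. w * g w)" using fg by (simp add: fun_eq_iff)
      thus ?thesis using \<open>((\<lambda>w. w * g w) has_field_derivative _) _\<close> by simp
    qed
    thus ?thesis by (rule DERIV_imp_deriv)
  qed
  have hdg: "deriv g holomorphic_on B" using holg oB by (intro holomorphic_deriv)
  have "((\<lambda>w. g w + w * deriv g w) has_field_derivative (deriv g 0 + (1 * deriv g 0 + deriv (deriv g) 0 * 0))) (at 0)"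
    by (intro DERIV_add DERIV_mult dg[OF B0] DERIV_ident holomorphic_derivI[OF hdg oB B0])
  hence d2: "((\<lambda>w. g w + w * deriv g w) has_field_derivative (2 * deriv g 0)) (at 0)" by simp
  hence "(deriv f has_field_derivative (2 * deriv g 0)) (at 0)"
  proof (rule has_field_derivative_transform_within_open[where S=B])
    show "(\<lambda>w. g w + w * deriv g w) x = deriv f x" if "x \<in> B" for x using dfe[OF that] by simp
  qed (use d2 oB B0 in \<open>simp_all\<close>)
  hence a2: "deriv (deriv f) 0 / 2 = deriv g 0" by (simp add: DERIV_imp_deriv)
  assume "- 1 / (deriv (deriv f) 0 / 2 + mu) \<in> f ` ball 0 1"
  then obtain z where zB: "z \<in> B" and fz: "f z = - 1 / (deriv g 0 + mu)"
    by (auto simp: B_def a2)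
  have nz: "deriv g 0 + mu \<noteq> 0" using assms(5) a2 by simp
  have z0: "z \<noteq> 0" using fz f0 nz by auto
  have "1 / f z = - (deriv g 0 + mu)" using fz nz by simp
  hence "1 / z = - mu - (h z - h 0)" using hf[OF z0] h0 by (simp add: algebra_simps) (metis add.commute add.left_commute)
  hence "norm (1 / z) \<le> norm mu + norm (h z - h 0)" using norm_triangle_ineq4[of "-mu" "h z - h 0"] by simp
  also have "\<dots> \<le> (1 - lam) + lam * norm z" using hB[OF zB] assms(4) by linarith
  also have "\<dots> < 1" using assms(1) zB by (simp add: B_def)
  finally have "norm (1/z) < 1" .
  moreover have "norm z < 1" using zB by (simp add: B_def)
  moreover have "norm z > 0" using z0 by simp
  ultimately show False by (simp add: norm_divide field_simps)

qed

end
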